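(* Let $X$ be a finite set of distinct points in $\mathbb{R}^2$ such that no three points of $X$ are collinear. Fix distinct points $s, t \in X$. Then there exists a noncrossing Hamiltonian path through $X$ with endpoints $s$ and $t$.
   Context: Edges are straight line segments between points: for an edge $e=\{a,b\}$, $L(e)$ is the closed segment from $a$ to $b$. A path (set of edges) is noncrossing if no two of its edges have intersecting line segments (other than at a shared endpoint). *)

theory Defs
  imports "HOL-Analysis.Analysis"
begin

text \<open>A path through a point set is given by the list of its vertices in order;
  its edges are the consecutive pairs. L(e) is the closed segment.\<close>

definition hamiltonian_path :: "(real^2) set \<Rightarrow> (real^2) list \<Rightarrow> bool" where
  "hamiltonian_path X ps \<longleftrightarrow> distinct ps \<and> set ps = X"

definition noncrossing_path :: "(real^2) list \<Rightarrow> bool" where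
  "noncrossing_path ps \<longleftrightarrow>
     (\<forall>i j. i < j \<and> Suc j < length ps \<longrightarrow>
        closed_segment (ps!i) (ps!Suc i) \<inter> closed_segment (ps!j) (ps!Suc j)
          \<subseteq> {ps!i, ps!Suc i} \<inter> {ps!j, ps!Suc j})"

end

theory Submission
  imports Defs
begin

definition cross2 :: "real^2 \<Rightarrow> real^2 \<Rightarrow> real" where
  "cross2 v w = v$1 * w$2 - v$2 * w$1"

definition side :: "real^2 \<Rightarrow> real^2 \<Rightarrow> real^2 \<Rightarrow> real" where
  "side a b q = cross2 (b - a) (q - a)"

lemma cross2_zero:
  assumes "cross2 v w = 0" "v \<noteq> 0"
  shows "\<exists>k. w = k *\<^sub>R v"
proof (cases "v$1 = 0")
  case True
  then have "v$2 \<noteq> 0" using assms(2) by (metis exhaust_2 vec_eq_iff zero_index)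
  then show ?thesis using assms(1) True
    by (intro exI[of _ "w$2 / v$2"]) (auto simp: vec_eq_iff forall_2 cross2_def field_simps)
next
  case False
  then show ?thesis using assms(1)
    by (intro exI[of _ "w$1 / v$1"]) (auto simp: vec_eq_iff forall_2 cross2_def field_simps)
qed

lemma side_coll: "side a b c = 0 \<Longrightarrow> collinear {a,b,c}"
proof -
  assume h: "side a b c = 0"
  have "collinear {0, b - a, c - a}"
  proof (cases "b - a = 0")
    case True then show ?thesis by (simp add: collinear_lemma)
  next
    case False
    then show ?thesis using cross2_zero[of "b-a" "c-a"] h by (auto simp: side_def collinear_lemma)
  qed
  then have "collinear {b, a, c}" by (subst collinear_3) (auto simp: insert_commute)
  then show ?thesis by (simp add: insert_commute)
qed

lemma side_swap: "side b a q = - side a b q"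
  by (simp add: side_def cross2_def algebra_simps)

lemma side_self[simp]: "side a b a = 0" "side a b b = 0"
  by (simp_all add: side_def cross2_def algebra_simps)

lemma side_seg:
  assumes "z \<in> closed_segment c d"
  shows "\<exists>u. 0 \<le> u \<and> u \<le> 1 \<and> z = (1-u) *\<^sub>R c + u *\<^sub>R d \<and>
     side a b z = (1-u) * side a b c + u * side a b d"
proof -
  obtain u where u: "0 \<le> u" "u \<le> 1" "z = (1-u) *\<^sub>R c + u *\<^sub>R d"
    using assms by (auto simp: in_segment)
  have "side a b z = (1-u) * side a b c + u * side a b d"
    unfolding u(3) by (simp add: side_def cross2_def algebra_simps)
  then show ?thesis using u by blast
qed

lemma seg_zero:
  assumes "z \<in> closed_segment c d" "side a b c \<ge> 0" "side a b d \<ge> 0" "side a b z = 0"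
  shows "(z = c \<and> side a b c = 0) \<or> (z = d \<and> side a b d = 0) \<or> (side a b c = 0 \<and> side a b d = 0)"
proof -
  obtain u where u: "0 \<le> u" "u \<le> 1" "z = (1-u) *\<^sub>R c + u *\<^sub>R d"
     "side a b z = (1-u) * side a b c + u * side a b d" using side_seg[OF assms(1)] by blast
  have p1: "(1-u) * side a b c \<ge> 0" "u * side a b d \<ge> 0" using u assms by auto
  then have z1: "(1-u) * side a b c = 0" "u * side a b d = 0" using u(4) assms(4) by linarith+
  show ?thesis
  proof (cases "u = 0")
    case True then show ?thesis using u z1 by simp
  next
    case False
    show ?thesis
    proof (cases "u = 1")
      case True then show ?thesis using u z1 by simp
    next
      case False2: False
      then show ?thesis using False z1 by simp
    qed
  qed
qed

definition gp :: "(real^2) set \<Rightarrow> bool" where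
  "gp X \<longleftrightarrow> (\<forall>a\<in>X. \<forall>b\<in>X. \<forall>c\<in>X. a \<noteq> b \<and> a \<noteq> c \<and> b \<noteq> c \<longrightarrow> \<not> collinear {a, b, c})"

lemma gp_side: "gp X \<Longrightarrow> a \<in> X \<Longrightarrow> b \<in> X \<Longrightarrow> c \<in> X \<Longrightarrow> a \<noteq> b \<Longrightarrow> a \<noteq> c \<Longrightarrow> b \<noteq> c
   \<Longrightarrow> side a b c \<noteq> 0"
  unfolding gp_def using side_coll by blast

lemma gp_subset: "gp X \<Longrightarrow> Y \<subseteq> X \<Longrightarrow> gp Y"
  unfolding gp_def by blast

definition supp :: "(real^2) set \<Rightarrow> real^2 \<Rightarrow> real^2 \<Rightarrow> bool" where
  "supp X a b \<longleftrightarrow> a \<noteq> b \<and> a \<in> X \<and> b \<in> X \<and>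
     ((\<forall>q\<in>X-{a,b}. side a b q > 0) \<or> (\<forall>q\<in>X-{a,b}. side a b q < 0))"

lemma supp_sym: "supp X a b \<Longrightarrow> supp X b a"
proof -
  assume h: "supp X a b"
  have e: "\<And>q. side b a q = - side a b q" by (rule side_swap)
  show ?thesis using h unfolding supp_def e by (auto simp: insert_commute)
qed

definition ok :: "(real^2) \<times> (real^2) \<Rightarrow> (real^2) \<times> (real^2) \<Rightarrow> bool" where
  "ok e f \<longleftrightarrow> closed_segment (fst e) (snd e) \<inter> closed_segment (fst f) (snd f)
      \<subseteq> {fst e, snd e} \<inter> {fst f, snd f}"

lemma ok_sym: "ok e f \<longleftrightarrow> ok f e"
  unfolding ok_def by blast

lemma ok_swap: "ok (a,b) f \<longleftrightarrow> ok (b,a) f"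
  unfolding ok_def fst_conv snd_conv closed_segment_commute[of a b] insert_commute[of a b] ..

lemma nonneg_side:
  assumes "\<forall>q\<in>X-{a,b}. side a b q > 0" "c \<in> X"
  shows "side a b c \<ge> 0" "side a b c = 0 \<Longrightarrow> c = a \<or> c = b"
proof -
  show "side a b c \<ge> 0"
  proof (cases "c = a \<or> c = b")
    case True then show ?thesis by auto
  next
    case False then have "c \<in> X-{a,b}" using assms(2) by simp
    then show ?thesis using assms(1) by (meson less_imp_le)
  qed
  show "c = a \<or> c = b" if "side a b c = 0"
  proof (rule ccontr)
    assume "\<not> (c = a \<or> c = b)"
    then have "c \<in> X-{a,b}" using assms(2) by simp
    then have "side a b c > 0" using assms(1) by blast
    then show False using that by simp
  qed
qed

lemma supp_ok_pos:
  assumes "a \<noteq> b" "\<forall>q\<in>X-{a,b}. side a b q > 0" "c \<in> X" "d \<in> X" "c \<noteq> d" "{c,d} \<noteq> {a,b}"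
  shows "ok (a,b) (c,d)"
  unfolding ok_def fst_conv snd_conv
proof
  fix z assume z: "z \<in> closed_segment a b \<inter> closed_segment c d"
  obtain u where "side a b z = (1-u) * side a b a + u * side a b b" using side_seg[of z a b a b] z by blast
  then have "side a b z = 0" by simp
  moreover note nc = nonneg_side[OF assms(2) assms(3)] and nd = nonneg_side[OF assms(2) assms(4)]
  ultimately have "(z = c \<and> side a b c = 0) \<or> (z = d \<and> side a b d = 0) \<or> (side a b c = 0 \<and> side a b d = 0)"
    using seg_zero[of z c d a b] z by blast
  then show "z \<in> {a, b} \<inter> {c, d}"
  proof (elim disjE conjE)
    assume "z = c" "side a b c = 0" then show ?thesis using nc by blast
  next
    assume "z = d" "side a b d = 0" then show ?thesis using nd by blast
  next
    assume "side a b c = 0" "side a b d = 0"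
    then have "c = a \<or> c = b" "d = a \<or> d = b" using nc nd by blast+
    then show ?thesis using assms(5,6) by auto
  qed
qed

lemma supp_ok:
  assumes "supp X a b" "c \<in> X" "d \<in> X" "c \<noteq> d" "{c,d} \<noteq> {a,b}"
  shows "ok (a,b) (c,d)"
proof -
  have "a \<noteq> b" using assms unfolding supp_def by auto
  show ?thesis
  proof (cases "\<forall>q\<in>X-{a,b}. side a b q > 0")
    case True then show ?thesis using supp_ok_pos assms \<open>a\<noteq>b\<close> by blast
  next
    case False
    have e: "\<And>q. side b a q = - side a b q" by (rule side_swap)
    have "\<forall>q\<in>X-{b,a}. side b a q > 0" using assms(1) False unfolding supp_def e
      by (auto simp: insert_commute)
    then have "ok (b,a) (c,d)" using supp_ok_pos[of b a X c d] assms \<open>a\<noteq>b\<close> by (auto simp: insert_commute)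
    then show ?thesis using ok_swap by blast
  qed
qed

lemma seg_nonneg:
  assumes "z \<in> closed_segment c d" "side a b c \<ge> 0" "side a b d \<ge> 0"
  shows "side a b z \<ge> 0"
proof -
  obtain u where u: "0 \<le> u" "u \<le> 1"
     "side a b z = (1-u) * side a b c + u * side a b d" using side_seg[OF assms(1)] by blast
  then show ?thesis using assms by simp
qed

lemma half_point:
  assumes "z \<in> closed_segment c d" "side s t c \<ge> 0" "side s t d \<ge> 0" "side s t z = 0"
    "c \<noteq> d" "side s t c = 0 \<Longrightarrow> c = s" "side s t d = 0 \<Longrightarrow> d = s"
  shows "z = s"
  using seg_zero[OF assms(1-4)] assms(5-7) by auto

lemma sep_ok:
  assumes "s \<noteq> t"
    "c = s \<or> side s t c > 0" "d = s \<or> side s t d > 0" "c \<noteq> d"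
    "e = t \<or> side s t e < 0" "f = t \<or> side s t f < 0" "e \<noteq> f"
  shows "ok (c,d) (e,f)"
  unfolding ok_def fst_conv snd_conv
proof
  fix z assume z: "z \<in> closed_segment c d \<inter> closed_segment e f"
  have "side s t z \<ge> 0" using z seg_nonneg[of z c d s t] assms by auto
  have e: "\<And>q. side t s q = - side s t q" by (rule side_swap)
  have "side t s z \<ge> 0" using z seg_nonneg[of z e f t s] assms unfolding e by auto
  then have z0: "side s t z = 0" "side t s z = 0" using \<open>side s t z \<ge> 0\<close> unfolding e by auto
  have "z = s" apply (rule half_point[of z c d s t]) using z z0 assms by auto
  moreover have "z = t" apply (rule half_point[of z e f t s]) using z z0 assms unfolding e by auto
  ultimately show "z \<in> {c, d} \<inter> {e, f}" using assms(1) by simp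
qed

definition edges :: "(real^2) list \<Rightarrow> ((real^2) \<times> (real^2)) list" where
  "edges ps = zip ps (tl ps)"

lemma edges_nth: "i < length ps - 1 \<Longrightarrow> edges ps ! i = (ps ! i, ps ! Suc i)"
  by (simp add: edges_def nth_tl)

lemma ok_pair: "ok (a,b) (c,d) \<longleftrightarrow> closed_segment a b \<inter> closed_segment c d \<subseteq> {a,b} \<inter> {c,d}"
  by (simp add: ok_def)

lemma nc_iff: "noncrossing_path ps \<longleftrightarrow> sorted_wrt ok (edges ps)"
proof -
  have l: "length (edges ps) = length ps - 1" by (simp add: edges_def)
  have "(\<forall>i j. i < j \<and> Suc j < length ps \<longrightarrow> ok (ps!i, ps!Suc i) (ps!j, ps!Suc j))
     \<longleftrightarrow> (\<forall>i j. i < j \<longrightarrow> j < length ps - 1 \<longrightarrow> ok (edges ps ! i) (edges ps ! j))"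
    by (auto simp: edges_nth simp del: ok_pair)
  then show ?thesis
    unfolding noncrossing_path_def sorted_wrt_iff_nth_less l ok_pair .
qed

lemma edges_Cons: "xs \<noteq> [] \<Longrightarrow> edges (x # xs) = (x, hd xs) # edges xs"
  by (cases xs) (auto simp: edges_def)

lemma edges_single[simp]: "edges [x] = []"
  by (simp add: edges_def)

lemma edges_append:
  "xs \<noteq> [] \<Longrightarrow> ys \<noteq> [] \<Longrightarrow> edges (xs @ ys) = edges xs @ (last xs, hd ys) # edges ys"
proof (induction xs)
  case Nil then show ?case by simp
next
  case (Cons x xs)
  show ?case
  proof (cases "xs = []")
    case True then show ?thesis using Cons by (simp add: edges_Cons)
  next
    case False then show ?thesis using Cons by (simp add: edges_Cons)
  qed
qed

lemma edges_rev: "edges (rev ps) = rev (map (\<lambda>(a,b). (b,a)) (edges ps))"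
proof (induction ps rule: rev_induct)
  case Nil then show ?case by (simp add: edges_def)
next
  case (snoc x xs)
  show ?case
  proof (cases "xs = []")
    case True then show ?thesis by simp
  next
    case False
    then show ?thesis using snoc by (simp add: edges_Cons edges_append hd_rev)
  qed
qed

lemma edge_mem:
  assumes "e \<in> set (edges ps)" "distinct ps"
  shows "fst e \<in> set ps" "snd e \<in> set ps" "fst e \<noteq> snd e"
proof -
  obtain i where "ps ! i = fst e" "tl ps ! i = snd e" "i < length ps" "i < length (tl ps)"
    using assms(1) unfolding edges_def in_set_zip by blast
  then have i: "i < length ps - 1" "e = (ps ! i, ps ! Suc i)" by (auto simp: nth_tl prod_eq_iff)
  show "fst e \<in> set ps" "snd e \<in> set ps" using i by auto
  show "fst e \<noteq> snd e" using i assms(2) by (auto simp: nth_eq_iff_index_eq)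
qed

definition hp :: "(real^2) set \<Rightarrow> real^2 \<Rightarrow> real^2 \<Rightarrow> (real^2) list \<Rightarrow> bool" where
  "hp X s t ps \<longleftrightarrow> hamiltonian_path X ps \<and> noncrossing_path ps \<and> hd ps = s \<and> last ps = t"

lemma hp_rev:
  assumes "hp X t s ps" "s \<in> X"
  shows "hp X s t (rev ps)"
proof -
  have ne: "ps \<noteq> []" using assms unfolding hp_def hamiltonian_path_def by auto
  have "sorted_wrt ok (edges ps)" using assms unfolding hp_def nc_iff by simp
  then have "sorted_wrt ok (edges (rev ps))"
    unfolding edges_rev sorted_wrt_rev sorted_wrt_map
    by (rule sorted_wrt_mono_rel[rotated]) (auto, metis ok_sym ok_swap)
  then show ?thesis using assms ne unfolding hp_def nc_iff hamiltonian_path_def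
    by (simp add: hd_rev last_rev)
qed

lemma hp_two: "s \<noteq> t \<Longrightarrow> hp {s,t} s t [s,t]"
  by (simp add: hp_def hamiltonian_path_def nc_iff edges_def)

lemma hp_ne: "hp X s t ps \<Longrightarrow> s \<in> X \<Longrightarrow> ps \<noteq> []"
  unfolding hp_def hamiltonian_path_def by auto

lemma hp_peel:
  assumes "hp (X - {t}) s u ps" "supp X t u" "s \<in> X" "s \<noteq> t"
  shows "hp X s t (ps @ [t])"
proof -
  have tu: "t \<in> X" "u \<in> X" "t \<noteq> u" using assms(2) unfolding supp_def by auto
  have ne: "ps \<noteq> []" using hp_ne[OF assms(1)] assms(3,4) by auto
  have d: "distinct ps" "set ps = X - {t}" "hd ps = s" "last ps = u" "sorted_wrt ok (edges ps)"
    using assms(1) unfolding hp_def hamiltonian_path_def nc_iff by auto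
  have ed: "edges (ps @ [t]) = edges ps @ [(u, t)]" using edges_append[OF ne, of "[t]"] d by simp
  have cr: "ok e (u,t)" if e: "e \<in> set (edges ps)" for e
  proof -
    obtain c d where cd: "e = (c,d)" by fastforce
    have m: "c \<in> set ps" "d \<in> set ps" "c \<noteq> d" using edge_mem[OF e d(1)] cd by auto
    have "ok (t,u) (c,d)" apply (rule supp_ok[OF assms(2)]) using m d(2) by auto
    then show ?thesis using cd by (metis ok_sym ok_swap)
  qed
  have "sorted_wrt ok (edges (ps @ [t]))" unfolding ed sorted_wrt_append using d(5) cr by auto
  then show ?thesis using d ne tu unfolding hp_def hamiltonian_path_def nc_iff by auto
qed

lemma hp_split:
  assumes "s \<noteq> t" "gp X" "s \<in> X" "t \<in> X"
    and X1: "X1 = {q\<in>X. q = s \<or> side s t q > 0}" and X2: "X2 = {q\<in>X. q = t \<or> side s t q < 0}"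
    and p1: "hp X1 s a p1" and p2: "hp X2 b t p2" and ab: "supp X a b"
  shows "hp X s t (p1 @ p2)"
proof -
  have s1: "s \<in> X1" using X1 assms by auto
  have t2: "t \<in> X2" using X2 assms by auto
  have ne1: "p1 \<noteq> []" using hp_ne[OF p1 s1] .
  have ne2: "p2 \<noteq> []" using p2 t2 unfolding hp_def hamiltonian_path_def by auto
  have d1: "distinct p1" "set p1 = X1" "hd p1 = s" "last p1 = a" "sorted_wrt ok (edges p1)"
    using p1 unfolding hp_def hamiltonian_path_def nc_iff by auto
  have d2: "distinct p2" "set p2 = X2" "hd p2 = b" "last p2 = t" "sorted_wrt ok (edges p2)"
    using p2 unfolding hp_def hamiltonian_path_def nc_iff by auto
  have a1: "a \<in> X1" using d1 ne1 last_in_set by metis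
  have b2: "b \<in> X2" using d2 ne2 hd_in_set by metis
  have st0: "side s t s = 0" "side s t t = 0" by simp_all
  have disj: "X1 \<inter> X2 = {}" using X1 X2 assms(1) st0 by auto
  have un: "X1 \<union> X2 = X"
  proof
    show "X1 \<union> X2 \<subseteq> X" using X1 X2 by auto
    show "X \<subseteq> X1 \<union> X2"
    proof
      fix q assume q: "q \<in> X"
      show "q \<in> X1 \<union> X2"
      proof (cases "q = s \<or> q = t")
        case True then show ?thesis using X1 X2 q by auto
      next
        case False
        then have "side s t q \<noteq> 0" using gp_side[OF assms(2) assms(3) assms(4) q] assms(1) by auto
        then show ?thesis using X1 X2 q by force
      qed
    qed
  qed
  have ed: "edges (p1 @ p2) = edges p1 @ (a, b) # edges p2" using edges_append[OF ne1 ne2] d1 d2 by simp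
  have X1X: "X1 \<subseteq> X" "X2 \<subseteq> X" using un by auto
  have c1: "ok e (a,b)" if e: "e \<in> set (edges p1)" for e
  proof -
    obtain c d where cd: "e = (c,d)" by fastforce
    have m: "c \<in> X1" "d \<in> X1" "c \<noteq> d" using edge_mem[OF e d1(1)] cd d1(2) by auto
    have "b \<notin> X1" using b2 disj by auto
    then have "ok (a,b) (c,d)" apply (intro supp_ok[OF ab]) using m X1X by auto
    then show ?thesis using cd ok_sym by blast
  qed
  have c2: "ok (a,b) f" if f: "f \<in> set (edges p2)" for f
  proof -
    obtain c d where cd: "f = (c,d)" by fastforce
    have m: "c \<in> X2" "d \<in> X2" "c \<noteq> d" using edge_mem[OF f d2(1)] cd d2(2) by auto
    have "a \<notin> X2" using a1 disj by auto
    then show "ok (a,b) f" unfolding cd apply (intro supp_ok[OF ab]) using m X1X by auto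
  qed
  have c3: "ok e f" if e: "e \<in> set (edges p1)" and f: "f \<in> set (edges p2)" for e f
  proof -
    obtain c d where cd: "e = (c,d)" by fastforce
    obtain c' d' where cd': "f = (c',d')" by fastforce
    have m: "c \<in> X1" "d \<in> X1" "c \<noteq> d" using edge_mem[OF e d1(1)] cd d1(2) by auto
    have m': "c' \<in> X2" "d' \<in> X2" "c' \<noteq> d'" using edge_mem[OF f d2(1)] cd' d2(2) by auto
    show ?thesis unfolding cd cd' apply (rule sep_ok[OF assms(1)]) using m m' X1 X2 by auto
  qed
  have "sorted_wrt ok (edges (p1 @ p2))" unfolding ed sorted_wrt_append
    using d1(5) d2(5) c1 c2 c3 by auto
  moreover have "distinct (p1 @ p2)" using d1 d2 disj by auto
  ultimately show ?thesis using d1 d2 un ne1 ne2 unfolding hp_def hamiltonian_path_def nc_iff by auto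
qed

definition xc :: "real^2 \<Rightarrow> real^2 \<Rightarrow> real^2 \<Rightarrow> real" where
  "xc s t q = (t-s)$1 * (q-s)$1 + (t-s)$2 * (q-s)$2"

lemma iden_real: fixes a1 a2 b1 b2 q1 q2 s1 s2 t1 t2 :: real shows
  "((b1-a1)*(q2-a2) - (b2-a2)*(q1-a1)) * ((t1-s1)*(t1-s1) + (t2-s2)*(t2-s2)) =
   (((t1-s1)*(b1-s1) + (t2-s2)*(b2-s2)) - ((t1-s1)*(a1-s1) + (t2-s2)*(a2-s2))) *
   (((t1-s1)*(q2-s2) - (t2-s2)*(q1-s1)) - ((t1-s1)*(a2-s2) - (t2-s2)*(a1-s1)))
   - (((t1-s1)*(b2-s2) - (t2-s2)*(b1-s1)) - ((t1-s1)*(a2-s2) - (t2-s2)*(a1-s1))) *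
   (((t1-s1)*(q1-s1) + (t2-s2)*(q2-s2)) - ((t1-s1)*(a1-s1) + (t2-s2)*(a2-s2)))"
  by algebra
lemma side_iden:
  "side a b q * xc s t t = (xc s t b - xc s t a) * (side s t q - side s t a)
      - (side s t b - side s t a) * (xc s t q - xc s t a)"
  unfolding side_def cross2_def xc_def vector_minus_component by (rule iden_real)
lemma sq_pos: "(x::real) \<noteq> 0 \<or> y \<noteq> 0 \<Longrightarrow> x * x + y * y > 0"
  by (metis add_pos_nonneg add_nonneg_pos not_real_square_gt_zero zero_le_square)
lemma xc_pos: "s \<noteq> t \<Longrightarrow> xc s t t > 0"
proof -
  assume "s \<noteq> t"
  then have "t - s \<noteq> 0" by simp
  then have "(t-s)$1 \<noteq> 0 \<or> (t-s)$2 \<noteq> 0" by (simp add: vec_eq_iff forall_2)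
  then show ?thesis unfolding xc_def by (rule sq_pos)
qed
lemma xc_s[simp]: "xc s t s = 0" by (simp add: xc_def)

lemma le_div_neg: "(c::real) < 0 \<Longrightarrow> b / c \<le> a \<Longrightarrow> a * c \<le> b"
  by (simp add: neg_divide_le_eq)

lemma frac_le_pos: "(y1::real) > 0 \<Longrightarrow> y2 > 0 \<Longrightarrow> x1 / y1 \<le> x2 / y2 \<Longrightarrow> x1 * y2 \<le> x2 * y1"
proof -
  assume h: "y1 > 0" "y2 > 0" "x1 / y1 \<le> x2 / y2"
  have "x1 \<le> x2 / y2 * y1" using h pos_divide_le_eq by blast
  then have "x1 * y2 \<le> (x2 / y2 * y1) * y2" using h(2) mult_right_mono less_imp_le by blast
  also have "\<dots> = x2 * y1" using h(2) by simp
  finally show ?thesis .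
qed

lemma nn_div: "0 \<le> x * c \<Longrightarrow> 0 < (c::real) \<Longrightarrow> 0 \<le> x"
  by (simp add: zero_le_mult_iff)

lemma key:
  assumes fin: "finite X" and g: "gp X" and sX: "s \<in> X" and tX: "t \<in> X" and st: "s \<noteq> t"
    and U: "\<exists>q\<in>X. side s t q > 0"
  shows "(\<exists>u. u \<noteq> s \<and> supp X t u) \<or> (\<exists>a b. side s t a > 0 \<and> side s t b < 0 \<and> supp X a b)"
proof -
  define N where "N = xc s t t"
  define Xc where "Xc = xc s t"
  define Y where "Y = side s t"
  have N: "N > 0" using xc_pos st N_def by simp
  have Xs: "Xc s = 0" "Xc t = N" using Xc_def N_def by simp_all
  have Ys: "Y s = 0" "Y t = 0" using Y_def by simp_all
  have iden: "\<And>a b q. side a b q * N = (Xc b - Xc a)*(Y q - Y a) - (Y b - Y a)*(Xc q - Xc a)"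
    unfolding N_def Xc_def Y_def by (rule side_iden)
  have pos_of: "\<And>a b q. side a b q * N \<ge> 0 \<Longrightarrow> side a b q \<ge> 0"
    using N by (simp add: zero_le_mult_iff)
  have Y0: "q = s \<or> q = t" if "q \<in> X" "Y q = 0" for q
    using gp_side[OF g sX tX that(1) st] that(2) unfolding Y_def by blast
  have strict: "side a b q > 0" if "a\<in>X" "b\<in>X" "q\<in>X" "a\<noteq>b" "q\<noteq>a" "q\<noteq>b" "side a b q \<ge> 0" for a b q
    using gp_side[OF g that(1-3) that(4)] that by force
  define cr where "cr = (\<lambda>a b. (Xc a * Y b - Xc b * Y a)/(Y b - Y a))"
  define UD where "UD = {q\<in>X. Y q > 0} \<times> {q\<in>X. Y q < 0}"
  have finUD: "finite UD" using fin by (simp add: UD_def)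
  show ?thesis
  proof (cases "\<exists>p\<in>UD. cr (fst p) (snd p) > N")
    case True
    then have ne: "UD \<noteq> {}" by auto
    define M where "M = Max ((\<lambda>p. cr (fst p) (snd p)) ` UD)"
    have "M \<in> (\<lambda>p. cr (fst p) (snd p)) ` UD" using Max_in finUD ne M_def by simp
    then obtain a b where ab: "(a,b) \<in> UD" "cr a b = M" by auto
    have Mge: "cr a' b' \<le> M" if "(a',b') \<in> UD" for a' b'
    proof -
      have "cr (fst (a',b')) (snd (a',b')) \<in> (\<lambda>p. cr (fst p) (snd p)) ` UD" using that by blast
      then show ?thesis unfolding M_def using finUD by (simp add: Max_ge)
    qed
    have MN: "M > N" using True Mge by force
    have a: "a \<in> X" "Y a > 0" and b: "b \<in> X" "Y b < 0" using ab(1) unfolding UD_def by auto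
    have dne: "Y b - Y a \<noteq> 0" using a b by simp
    have hC: "M * (Y b - Y a) = Xc a * Y b - Xc b * Y a"
      using dne unfolding ab(2)[symmetric] cr_def by simp
    have ab_ne: "a \<noteq> b" using a b by auto
    have allq: "\<forall>q\<in>X-{b,a}. side b a q > 0"
    proof
      fix q assume q: "q \<in> X - {b,a}"
      have E: "side b a q * N = (Xc a - Xc b)*(Y q - Y b) - (Y a - Y b)*(Xc q - Xc b)" by (rule iden)
      have "side b a q * N \<ge> 0"
      proof (cases "Y q > 0")
        case True
        have "(q,b) \<in> UD" using q True b unfolding UD_def by auto
        then have "cr q b \<le> M" by (rule Mge)
        then have K: "M*(Y b - Y q) \<le> Xc q * Y b - Xc b * Y q"
          using le_div_neg[of "Y b - Y q"] b True unfolding cr_def by simp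
        have eq: "((Xc a - Xc b)*(Y q - Y b) - (Y a - Y b)*(Xc q - Xc b)) * (- Y b)
           = (Y a - Y b) * (Xc q * Y b - Xc b * Y q - M*(Y b - Y q))" using hC by algebra
        have "(Y a - Y b) * (Xc q * Y b - Xc b * Y q - M*(Y b - Y q)) \<ge> 0" using K a b by simp
        then have "((Xc a - Xc b)*(Y q - Y b) - (Y a - Y b)*(Xc q - Xc b)) * (- Y b) \<ge> 0" using eq by simp
        then have "0 \<le> (Xc a - Xc b)*(Y q - Y b) - (Y a - Y b)*(Xc q - Xc b)"
          by (rule nn_div) (use b in simp)
        then show ?thesis using E by simp
      next
        case False
        show ?thesis
        proof (cases "Y q < 0")
          case True
          have "(a,q) \<in> UD" using q True a unfolding UD_def by auto
          then have "cr a q \<le> M" by (rule Mge)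
          then have K: "M*(Y q - Y a) \<le> Xc a * Y q - Xc q * Y a"
            using le_div_neg[of "Y q - Y a"] a True unfolding cr_def by simp
          have eq: "((Xc a - Xc b)*(Y q - Y b) - (Y a - Y b)*(Xc q - Xc b)) * Y a
             = (Y a - Y b) * (Xc a * Y q - Xc q * Y a - M*(Y q - Y a))" using hC by algebra
          have "(Y a - Y b) * (Xc a * Y q - Xc q * Y a - M*(Y q - Y a)) \<ge> 0" using K a b by simp
          then have "((Xc a - Xc b)*(Y q - Y b) - (Y a - Y b)*(Xc q - Xc b)) * Y a \<ge> 0" using eq by simp
          then have "0 \<le> (Xc a - Xc b)*(Y q - Y b) - (Y a - Y b)*(Xc q - Xc b)"
            by (rule nn_div) (use a in simp)
          then show ?thesis using E by simp
        next
          case False2: False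
          then have Yq: "Y q = 0" using False by simp
          then have "q = s \<or> q = t" using Y0 q by blast
          then have XqN: "Xc q \<le> N" using Xs N by auto
          have eq: "(Xc a - Xc b)*(Y q - Y b) - (Y a - Y b)*(Xc q - Xc b) = (Y a - Y b) * (M - Xc q)"
            using hC Yq by algebra
          have "(Y a - Y b) * (M - Xc q) \<ge> 0" using a b XqN MN by simp
          then show ?thesis using E eq by simp
        qed
      qed
      then have "side b a q \<ge> 0" by (rule pos_of)
      then show "side b a q > 0" using strict[of b a q] q a b ab_ne by auto
    qed
    then have "supp X b a" unfolding supp_def using a b ab_ne by auto
    then have "supp X a b" by (rule supp_sym)
    then show ?thesis using a b unfolding Y_def by blast
  next
    case False
    then have le: "cr a b \<le> N" if "a\<in>X" "Y a > 0" "b\<in>X" "Y b < 0" for a b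
      using that unfolding UD_def by force
    define f where "f = (\<lambda>q. (Xc q - N)/Y q)"
    define UU where "UU = {q\<in>X. Y q > 0}"
    have finU: "finite UU" using fin UU_def by simp
    have neU: "UU \<noteq> {}" using U unfolding UU_def Y_def by auto
    define M where "M = Max (f ` UU)"
    have "M \<in> f ` UU" using Max_in finU neU M_def by simp
    then obtain u where u: "u \<in> UU" "f u = M" by auto
    have Mge: "f q \<le> f u" if "q \<in> UU" for q
      using that finU u(2) unfolding M_def by (simp add: Max_ge)
    have uX: "u \<in> X" "Y u > 0" using u UU_def by auto
    have tu: "t \<noteq> u" using uX Ys by auto
    have allq: "\<forall>q\<in>X-{t,u}. side t u q > 0"
    proof
      fix q assume q: "q \<in> X - {t,u}"
      have F: "side t u q * N = (Xc u - Xc t)*(Y q - Y t) - (Y u - Y t)*(Xc q - Xc t)" by (rule iden)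
      then have F': "side t u q * N = (Xc u - N)*Y q - Y u*(Xc q - N)" using Xs Ys by simp
      have "side t u q * N \<ge> 0"
      proof (cases "Y q > 0")
        case True
        then have "f q \<le> f u" using Mge q UU_def by auto
        then have "(Xc q - N) * Y u \<le> (Xc u - N) * Y q" using frac_le_pos[of "Y q" "Y u"] True uX
          unfolding f_def by simp
        then have "Y u * (Xc q - N) \<le> (Xc u - N) * Y q" by (simp add: mult.commute)
        then show ?thesis using F' by simp
      next
        case False
        show ?thesis
        proof (cases "Y q < 0")
          case True
          have "cr u q \<le> N" using le uX q True by auto
          then have K: "N*(Y q - Y u) \<le> Xc u * Y q - Xc q * Y u"
            using le_div_neg[of "Y q - Y u"] uX True unfolding cr_def by simp
          have "(Xc u - N)*Y q - Y u*(Xc q - N) = (Xc u * Y q - Xc q * Y u) - N*(Y q - Y u)"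
            by (simp add: algebra_simps)
          then show ?thesis using F' K by simp
        next
          case False2: False
          then have "Y q = 0" using False by simp
          then have "q = s" using Y0 q by blast
          then show ?thesis using F' Xs Ys uX N by simp
        qed
      qed
      then have "side t u q \<ge> 0" by (rule pos_of)
      then show "side t u q > 0" using strict[of t u q] q uX tX tu by auto
    qed
    then have "supp X t u" unfolding supp_def using uX tX tu by auto
    moreover have "u \<noteq> s" using uX Ys by auto
    ultimately show ?thesis by blast
  qed
qed


lemma main_ind:
  "\<forall>X s t. card X = n \<longrightarrow> finite X \<longrightarrow> gp X \<longrightarrow> s \<in> X \<longrightarrow> t \<in> X \<longrightarrow> s \<noteq> t
     \<longrightarrow> (\<exists>ps. hp X s t ps)"
proof (induction n rule: less_induct)
  case (less n)
  show ?case
  proof (intro allI impI)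
    fix X s t
    assume cX: "card X = n" and fin: "finite X" and g: "gp X" and sX: "s \<in> X" and tX: "t \<in> X"
      and st: "s \<noteq> t"
    have IH: "\<exists>ps. hp Y a b ps" if "Y \<subseteq> X" "Y \<noteq> X" "a \<in> Y" "b \<in> Y" "a \<noteq> b" for Y a b
    proof -
      have "card Y < n" using cX fin that psubset_card_mono by blast
      moreover have "finite Y" using fin that finite_subset by blast
      moreover have "gp Y" using g that gp_subset by blast
      ultimately show ?thesis using less that by blast
    qed
    have step: "\<exists>ps. hp X s t ps" if sX: "s \<in> X" and tX: "t \<in> X" and st: "s \<noteq> t"
      and U: "\<exists>q\<in>X. side s t q > 0" for s t
    proof -
      from key[OF fin g sX tX st U] show ?thesis
      proof (elim disjE exE conjE)
        fix u assume us: "u \<noteq> s" and su: "supp X t u"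
        have uX: "u \<in> X" "u \<noteq> t" using su unfolding supp_def by auto
        obtain ps where "hp (X - {t}) s u ps" using IH[of "X - {t}" s u] uX us sX tX st by auto
        then show ?thesis using hp_peel su sX st by blast
      next
        fix a b assume a: "side s t a > 0" and b: "side s t b < 0" and ab: "supp X a b"
        have abX: "a \<in> X" "b \<in> X" using ab unfolding supp_def by auto
        define X1 where "X1 = {q\<in>X. q = s \<or> side s t q > 0}"
        define X2 where "X2 = {q\<in>X. q = t \<or> side s t q < 0}"
        have "s \<noteq> a" using a by auto
        moreover have "t \<notin> X1" using st unfolding X1_def by auto
        moreover have "X1 \<subseteq> X" "s \<in> X1" "a \<in> X1" using abX a sX unfolding X1_def by auto
        ultimately obtain p1 where p1: "hp X1 s a p1"
          using IH[of X1 s a] tX by blast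
        have "b \<noteq> t" using b by auto
        moreover have "s \<notin> X2" using st unfolding X2_def by auto
        moreover have "X2 \<subseteq> X" "b \<in> X2" "t \<in> X2" using abX b tX unfolding X2_def by auto
        ultimately obtain p2 where p2: "hp X2 b t p2"
          using IH[of X2 b t] sX by blast
        show ?thesis using hp_split[OF st g sX tX X1_def X2_def p1 p2 ab] by blast
      qed
    qed
    show "\<exists>ps. hp X s t ps"
    proof (cases "X = {s,t}")
      case True then show ?thesis using hp_two st by blast
    next
      case False
      then obtain q where q: "q \<in> X" "q \<noteq> s" "q \<noteq> t" using sX tX by blast
      have "side s t q \<noteq> 0" using gp_side[OF g sX tX q(1) st] q by auto
      then show ?thesis
      proof (cases "side s t q > 0")
        case True then show ?thesis using step sX tX st q by blast
      next
        case False
        then have "side t s q > 0" using \<open>side s t q \<noteq> 0\<close> side_swap[of t s q] by simp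
        then obtain ps where "hp X t s ps" using step[of t s] sX tX st q by blast
        then show ?thesis using hp_rev sX by blast
      qed
    qed
  qed
qed

theorem lemma2:
  fixes X :: "(real^2) set" and s t :: "real^2"
  assumes "finite X"
    and "\<forall>a\<in>X. \<forall>b\<in>X. \<forall>c\<in>X. a \<noteq> b \<and> a \<noteq> c \<and> b \<noteq> c \<longrightarrow> \<not> collinear {a, b, c}"
    and "s \<in> X" and "t \<in> X" and "s \<noteq> t"
  shows "\<exists>ps. hamiltonian_path X ps \<and> noncrossing_path ps \<and> hd ps = s \<and> last ps = t"
proof -
  have "gp X" using assms(2) unfolding gp_def .
  then obtain ps where "hp X s t ps" using main_ind assms by blast
  then show ?thesis unfolding hp_def by blast
qed

end
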